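(* A subset $A$ of nonzero elements of a real normed space $X$ is topologically linearly independent if and only if it is uniformly minimal.
   Context: $X$ carries its norm topology. A subset $A\subseteq X\setminus\{0\}$ is topologically linearly independent if for every neighborhood $W$ of $0$ there is a neighborhood $U$ of $0$ such that for every finite $F\subseteq A$ and reals $\{r_a: a\in F\}$, $\sum_{a\in F}r_a a\in U$ implies $r_a a\in W$ for all $a\in F$. A subset $A\subseteq X\setminus\{0\}$ is uniformly minimal if there exists $K>0$ such that for every $a\in A$, $\operatorname{dist}\bigl(a/\|a\|,\ \overline{\langle A\setminus\{a\}\rangle_{\mathbb{R}}}\bigr)\ge K$, where $\langle\cdot\rangle_{\mathbb{R}}$ denotes linear span and the bar denotes norm closure. *)

theory Defs
  imports "HOL-Analysis.Analysis"
begin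

definition top_lin_indep :: "'a::real_normed_vector set \<Rightarrow> bool" where
  "top_lin_indep A \<longleftrightarrow> 0 \<notin> A \<and>
     (\<forall>W. open W \<and> 0 \<in> W \<longrightarrow>
        (\<exists>U. open U \<and> 0 \<in> U \<and>
          (\<forall>F r. finite F \<and> F \<subseteq> A \<and> (\<Sum>a\<in>F. r a *\<^sub>R a) \<in> U \<longrightarrow>
                 (\<forall>a\<in>F. r a *\<^sub>R a \<in> W))))"

definition uniformly_minimal :: "'a::real_normed_vector set \<Rightarrow> bool" where
  "uniformly_minimal A \<longleftrightarrow> 0 \<notin> A \<and>
     (\<exists>K>0. \<forall>a\<in>A. infdist (a /\<^sub>R norm a) (closure (span (A - {a}))) \<ge> K)"

end

theory Submission
  imports Defs
begin

lemma infdist_closure_eq: "infdist x (closure S) = infdist x S"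
  by (simp add: infdist_eq_setdist)

lemma span_sum_mem:
  assumes "finite F" "F \<subseteq> B"
  shows "(\<Sum>b\<in>F. r b *\<^sub>R b) \<in> span B"
  using assms by (intro span_sum span_scale) (auto intro: span_base)

lemma dir1:
  fixes A :: "'a::real_normed_vector set"
  assumes "top_lin_indep A"
  shows "uniformly_minimal A"
proof -
  have A0: "0 \<notin> A" using assms unfolding top_lin_indep_def by blast
  obtain U where U: "open U" "0 \<in> U"
    and UP: "\<And>F r. finite F \<Longrightarrow> F \<subseteq> A \<Longrightarrow> (\<Sum>a\<in>F. r a *\<^sub>R a) \<in> U \<Longrightarrow> (\<forall>a\<in>F. r a *\<^sub>R a \<in> ball 0 1)"
  proof -
    have b: "open (ball (0::'a) 1) \<and> (0::'a) \<in> ball 0 1" by auto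
    have "\<forall>W. open W \<and> 0 \<in> W \<longrightarrow>
        (\<exists>U. open U \<and> 0 \<in> U \<and>
          (\<forall>F r. finite F \<and> F \<subseteq> A \<and> (\<Sum>a\<in>F. r a *\<^sub>R a) \<in> U \<longrightarrow>
                 (\<forall>a\<in>F. r a *\<^sub>R a \<in> W)))"
      using assms unfolding top_lin_indep_def by (rule conjunct2)
    from this[rule_format, OF b] obtain U where U1: "open U" "0 \<in> U" and
      U2: "\<forall>F r. finite F \<and> F \<subseteq> A \<and> (\<Sum>a\<in>F. r a *\<^sub>R a) \<in> U \<longrightarrow> (\<forall>a\<in>F. r a *\<^sub>R a \<in> ball 0 1)"
      by (elim exE conjE)
    show ?thesis
    proof (rule that[OF U1])
      fix F r assume "finite F" "F \<subseteq> A" "(\<Sum>a\<in>F. r a *\<^sub>R a) \<in> U"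
      then show "\<forall>a\<in>F. r a *\<^sub>R a \<in> ball 0 1" using U2 by blast
    qed
  qed
  obtain d where d: "d > 0" "ball 0 d \<subseteq> U" using U open_contains_ball by blast
  have key: "dist (a /\<^sub>R norm a) y \<ge> d" if a: "a \<in> A" and y: "y \<in> span (A - {a})" for a y
  proof (rule ccontr)
    assume nd: "\<not> dist (a /\<^sub>R norm a) y \<ge> d"
    from y obtain F r where F: "finite F" "F \<subseteq> A - {a}" "y = (\<Sum>b\<in>F. r b *\<^sub>R b)"
      unfolding span_explicit by blast
    define r' where "r' = (\<lambda>b. if b = a then 1 / norm a else - r b)"
    have aF: "a \<notin> F" using F by auto
    have "(\<Sum>b\<in>insert a F. r' b *\<^sub>R b) = r' a *\<^sub>R a + (\<Sum>b\<in>F. r' b *\<^sub>R b)"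
      using F(1) aF by simp
    also have "(\<Sum>b\<in>F. r' b *\<^sub>R b) = (\<Sum>b\<in>F. - (r b *\<^sub>R b))"
      using aF by (intro sum.cong) (auto simp: r'_def)
    also have "\<dots> = - y" using F(3) by (simp add: sum_negf)
    finally have "(\<Sum>b\<in>insert a F. r' b *\<^sub>R b) = a /\<^sub>R norm a - y"
      by (simp add: r'_def divide_inverse)
    moreover have "a /\<^sub>R norm a - y \<in> ball 0 d" using nd by (simp add: dist_norm norm_minus_commute)
    ultimately have "(\<Sum>b\<in>insert a F. r' b *\<^sub>R b) \<in> U" using d by auto
    then have "r' a *\<^sub>R a \<in> ball 0 1" using UP[of "insert a F" r'] F a by auto
    moreover have "a \<noteq> 0" using a A0 by auto
    ultimately show False by (simp add: r'_def)
  qed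
  have "\<forall>a\<in>A. infdist (a /\<^sub>R norm a) (closure (span (A - {a}))) \<ge> d"
  proof
    fix a assume a: "a \<in> A"
    have ne: "span (A - {a}) \<noteq> {}" using span_zero by blast
    have "infdist (a /\<^sub>R norm a) (span (A - {a})) \<ge> d"
      unfolding infdist_notempty[OF ne]
      by (rule cINF_greatest[OF ne]) (use key a in auto)
    then show "infdist (a /\<^sub>R norm a) (closure (span (A - {a}))) \<ge> d"
      by (simp add: infdist_closure_eq)
  qed
  then show ?thesis unfolding uniformly_minimal_def using A0 d by blast
qed

lemma dir2:
  fixes A :: "'a::real_normed_vector set"
  assumes "uniformly_minimal A"
  shows "top_lin_indep A"
proof -
  have A0: "0 \<notin> A" using assms unfolding uniformly_minimal_def by blast
  obtain K where K: "K > 0" and KA: "\<And>a. a \<in> A \<Longrightarrow> infdist (a /\<^sub>R norm a) (closure (span (A - {a}))) \<ge> K"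
    using assms unfolding uniformly_minimal_def by blast
  have dK: "dist (a /\<^sub>R norm a) y \<ge> K" if "a \<in> A" "y \<in> span (A - {a})" for a y
    using KA[OF that(1)] infdist_le[of y "closure (span (A - {a}))" "a /\<^sub>R norm a"]
      closure_subset that(2) by force
  have bound: "norm (c *\<^sub>R a) * K \<le> norm (c *\<^sub>R a + y)" if a: "a \<in> A" and y: "y \<in> span (A - {a})" for a y c
  proof (cases "c = 0")
    case True then show ?thesis by simp
  next
    case False
    have an: "norm a > 0" using a A0 by (metis zero_less_norm_iff)
    define z where "z = - (y /\<^sub>R (c * norm a))"
    have z: "z \<in> span (A - {a})" unfolding z_def using y by (intro span_neg span_scale)
    have "K \<le> norm (a /\<^sub>R norm a - z)" using dK[OF a z] by (simp add: dist_norm)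
    also have "a /\<^sub>R norm a - z = (c *\<^sub>R a + y) /\<^sub>R (c * norm a)"
      using False an by (simp add: z_def scaleR_add_right)
    also have "norm \<dots> = norm (c *\<^sub>R a + y) / (\<bar>c\<bar> * norm a)"
      by (simp add: abs_mult divide_inverse mult_ac)
    finally have "K * (\<bar>c\<bar> * norm a) \<le> norm (c *\<^sub>R a + y)"
      using False an by (simp add: pos_le_divide_eq)
    then show ?thesis by (simp add: mult_ac)
  qed
  have "\<exists>U. open U \<and> 0 \<in> U \<and>
          (\<forall>F r. finite F \<and> F \<subseteq> A \<and> (\<Sum>a\<in>F. r a *\<^sub>R a) \<in> U \<longrightarrow> (\<forall>a\<in>F. r a *\<^sub>R a \<in> W))"
    if W: "open W" "0 \<in> W" for W
  proof -
    obtain e where e: "e > 0" "ball 0 e \<subseteq> W" using W open_contains_ball by blast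
    show ?thesis
    proof (intro exI[of _ "ball 0 (K * e)"] conjI allI impI ballI)
      show "open (ball 0 (K * e))" by simp
      show "(0::'a) \<in> ball 0 (K * e)" using K e by simp
      fix F r a assume H: "finite F \<and> F \<subseteq> A \<and> (\<Sum>a\<in>F. r a *\<^sub>R a) \<in> ball 0 (K * e)" and aF: "a \<in> F"
      have aA: "a \<in> A" using H aF by auto
      have split: "(\<Sum>a\<in>F. r a *\<^sub>R a) = r a *\<^sub>R a + (\<Sum>b\<in>F - {a}. r b *\<^sub>R b)"
        using H aF by (simp add: sum.remove)
      have ys: "(\<Sum>b\<in>F - {a}. r b *\<^sub>R b) \<in> span (A - {a})"
        using H by (intro span_sum_mem) auto
      have "norm (r a *\<^sub>R a) * K \<le> norm (\<Sum>a\<in>F. r a *\<^sub>R a)"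
        using bound[OF aA ys] split by simp
      also have "\<dots> < K * e" using H by simp
      finally have "norm (r a *\<^sub>R a) < e" using K by (simp add: mult.commute)
      then show "r a *\<^sub>R a \<in> W" using e by auto
    qed
  qed
  then show ?thesis unfolding top_lin_indep_def using A0 by blast
qed

theorem theorem4p5:
  fixes A :: "'a::real_normed_vector set"
  assumes "0 \<notin> A"
  shows "top_lin_indep A \<longleftrightarrow> uniformly_minimal A"
  using dir1 dir2 by blast

end
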